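(* For every integer $n\ge 0$ and $x>0$, $$\big[\ln\partial_x,\ \partial_x\big]\, x^n = \frac{1}{x}\,\delta_{n0},$$ where $[A,B]=AB-BA$, $\partial_x$ is the ordinary derivative, $\delta_{n0}$ is the Kronecker delta, and $\ln\partial_x$ is defined in the context below (with $(\ln\partial_x)\,0 = 0$).
   Context: For real $\nu$, $x>0$ and $\mu\ge 0$, the fractional derivative of a power is defined by $\partial_x^\nu x^\mu = \frac{\Gamma(\mu+1)}{\Gamma(\mu-\nu+1)}\,x^{\mu-\nu}$. The logarithm of the derivative operator is defined on powers by $(\ln\partial_x)\,x^\mu := \lim_{\nu\to 0}\frac{\partial_x^\nu x^\mu - x^\mu}{\nu}$ and extended linearly; the operator $\partial_x\circ\ln\partial_x$ applies the ordinary derivative to the resulting function (which may contain $\ln x$). *)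

theory Defs
  imports "HOL-Analysis.Analysis"
begin

definition frac_deriv_pow :: "real \<Rightarrow> real \<Rightarrow> real \<Rightarrow> real" where
  "frac_deriv_pow \<nu> \<mu> x = Gamma (\<mu> + 1) / Gamma (\<mu> - \<nu> + 1) * x powr (\<mu> - \<nu>)"

definition ln_deriv_pow :: "real \<Rightarrow> real \<Rightarrow> real" where
  "ln_deriv_pow \<mu> x = Lim (at 0) (\<lambda>\<nu>. (frac_deriv_pow \<nu> \<mu> x - x powr \<mu>) / \<nu>)"

definition power_rep :: "(real \<Rightarrow> real) \<Rightarrow> (real \<Rightarrow> real) \<Rightarrow> bool" where
  "power_rep c f \<longleftrightarrow> finite {\<mu>. c \<mu> \<noteq> 0} \<and> (\<forall>\<mu>. c \<mu> \<noteq> 0 \<longrightarrow> \<mu> \<ge> 0) \<and>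
     (\<forall>y>0. f y = (\<Sum>\<mu>\<in>{\<mu>. c \<mu> \<noteq> 0}. c \<mu> * y powr \<mu>))"

text \<open>Linear extension of ln d/dx to finite combinations of powers
  (the representation is unique by linear independence of distinct powers).\<close>
definition ln_deriv :: "(real \<Rightarrow> real) \<Rightarrow> real \<Rightarrow> real" where
  "ln_deriv f x = (let c = (THE c. power_rep c f) in
      (\<Sum>\<mu>\<in>{\<mu>. c \<mu> \<noteq> 0}. c \<mu> * ln_deriv_pow \<mu> x))"

end

theory Submission
  imports Defs
begin

lemma powr_indep:
  fixes e :: "real \<Rightarrow> real"
  shows "finite S \<Longrightarrow> (\<forall>y>0. (\<Sum>\<mu>\<in>S. e \<mu> * y powr \<mu>) = 0) \<Longrightarrow> \<forall>\<mu>\<in>S. e \<mu> = 0"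
proof (induction "card S" arbitrary: S rule: less_induct)
  case less
  show ?case
  proof (cases "S = {}")
    case True thus ?thesis by simp
  next
    case False
    define m where "m = Min S"
    have mS: "m \<in> S" using False less.prems(1) by (simp add: m_def)
    have mle: "\<And>\<mu>. \<mu> \<in> S \<Longrightarrow> m \<le> \<mu>" using less.prems(1) by (simp add: m_def)
    have h: "\<forall>\<^sub>F y in at_right 0. (\<Sum>\<mu>\<in>S. e \<mu> * y powr (\<mu> - m)) = 0"
    proof -
      have "(\<Sum>\<mu>\<in>S. e \<mu> * y powr (\<mu> - m)) = 0" if "y > 0" for y :: real
      proof -
        have "(\<Sum>\<mu>\<in>S. e \<mu> * y powr (\<mu> - m)) = (\<Sum>\<mu>\<in>S. e \<mu> * y powr \<mu>) / y powr m"
          by (simp add: powr_diff sum_divide_distrib)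
        also have "\<dots> = 0" using less.prems(2) that by simp
        finally show ?thesis .
      qed
      thus ?thesis using eventually_at_right_less[of "0::real"] by (auto elim!: eventually_mono)
    qed
    have lim: "((\<lambda>y. \<Sum>\<mu>\<in>S. e \<mu> * y powr (\<mu> - m)) \<longlongrightarrow> (\<Sum>\<mu>\<in>S. if \<mu> = m then e \<mu> else 0)) (at_right 0)"
    proof (rule tendsto_sum)
      fix \<mu> assume "\<mu> \<in> S"
      show "((\<lambda>y. e \<mu> * y powr (\<mu> - m)) \<longlongrightarrow> (if \<mu> = m then e \<mu> else 0)) (at_right 0)"
      proof (cases "\<mu> = m")
        case True
        have "\<forall>\<^sub>F y in at_right 0. e \<mu> = e \<mu> * y powr (\<mu> - m)"
          using eventually_at_right_less[of "0::real"] by (rule eventually_mono) (simp add: True)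
        thus ?thesis using True by (simp add: tendsto_eventually Lim_transform_eventually[OF tendsto_const])
      next
        case False
        hence "\<mu> - m > 0" using mle[OF \<open>\<mu> \<in> S\<close>] by simp
        hence "((\<lambda>y::real. y powr (\<mu> - m)) \<longlongrightarrow> 0) (at_right 0)"
          by (intro tendsto_zero_powrI) (auto intro: tendsto_ident_at eventually_at_rightI[of 0 1])
        hence "((\<lambda>y. e \<mu> * y powr (\<mu> - m)) \<longlongrightarrow> e \<mu> * 0) (at_right 0)"
          by (intro tendsto_mult tendsto_const)
        thus ?thesis using False by simp
      qed
    qed
    have "((\<lambda>y. \<Sum>\<mu>\<in>S. e \<mu> * y powr (\<mu> - m)) \<longlongrightarrow> 0) (at_right (0::real))"
      using h by (simp add: tendsto_eventually Lim_transform_eventually[OF tendsto_const] eventually_mono)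
    hence em: "e m = 0"
      using tendsto_unique[OF _ lim] less.prems(1) mS by (simp add: sum.delta)
    have "card (S - {m}) < card S" using mS less.prems(1) by (meson card_Diff1_less)
    moreover have "\<forall>y>0. (\<Sum>\<mu>\<in>S - {m}. e \<mu> * y powr \<mu>) = 0"
      using less.prems(2) sum.remove[OF less.prems(1) mS, of "\<lambda>\<mu>. e \<mu> * _ powr \<mu>"] em by simp
    ultimately have "\<forall>\<mu>\<in>S - {m}. e \<mu> = 0" using less.hyps less.prems(1) by blast
    thus ?thesis using em by auto
  qed
qed

lemma ldp_eq:
  fixes \<mu> x :: real
  assumes "\<mu> \<ge> 0" "x > 0"
  shows "ln_deriv_pow \<mu> x = x powr \<mu> * (Digamma (\<mu> + 1) - ln x)"
proof -
  define g where "g = (\<lambda>\<nu>::real. Gamma (\<mu>+1) * rGamma (\<mu> - \<nu> + 1) * x powr (\<mu> - \<nu>))"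
  have fg: "frac_deriv_pow \<nu> \<mu> x = g \<nu>" for \<nu>
    by (simp add: frac_deriv_pow_def g_def rGamma_inverse_Gamma divide_inverse)
  have nn: "\<mu> + 1 \<notin> \<int>\<^sub>\<le>\<^sub>0" using assms(1)
    by (auto elim!: nonpos_Ints_cases)
  have G1: "Gamma (\<mu>+1) * rGamma (\<mu>+1) = 1"
  proof -
    have "Gamma (\<mu>+1) > 0" using assms(1) by (intro Gamma_real_pos) simp
    thus ?thesis by (simp add: rGamma_inverse_Gamma)
  qed
  have "(g has_field_derivative
     Gamma (\<mu>+1) * (- rGamma (\<mu> - 0 + 1) * Digamma (\<mu> - 0 + 1) * (0 - 1)) * x powr (\<mu> - 0)
     + Gamma (\<mu>+1) * rGamma (\<mu> - 0 + 1) * ((0 - 1) * ln x * x powr (\<mu> - 0))) (at 0)"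
  proof -
    have i1: "((\<lambda>\<nu>::real. \<mu> - \<nu> + 1) has_field_derivative (0 - 1)) (at 0)"
      by (auto intro!: derivative_eq_intros)
    have r1: "(rGamma has_field_derivative - rGamma (\<mu> - 0 + 1) * Digamma (\<mu> - 0 + 1)) (at (\<mu> - 0 + 1))"
      using has_field_derivative_rGamma_no_nonpos_int[OF nn] by simp
    have a: "((\<lambda>\<nu>. rGamma (\<mu> - \<nu> + 1)) has_field_derivative
       (- rGamma (\<mu> - 0 + 1) * Digamma (\<mu> - 0 + 1) * (0 - 1))) (at 0)"
      using DERIV_chain2[OF r1 i1] by simp
    have b: "((\<lambda>\<nu>. x powr (\<mu> - \<nu>)) has_field_derivative ((0 - 1) * ln x * x powr (\<mu> - 0))) (at 0)"
    proof -
      have "((\<lambda>\<nu>. exp ((\<mu> - \<nu>) * ln x)) has_field_derivative (exp ((\<mu> - 0) * ln x) * ((0 - 1) * ln x))) (at 0)"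
        by (auto intro!: derivative_eq_intros)
      thus ?thesis using assms(2) by (simp add: powr_def mult_ac)
    qed
    show ?thesis unfolding g_def
      using DERIV_mult[OF DERIV_cmult[OF a, of "Gamma (\<mu>+1)"] b] by (simp add: algebra_simps)
  qed
  moreover have "Gamma (\<mu>+1) * (- rGamma (\<mu> - 0 + 1) * Digamma (\<mu> - 0 + 1) * (0 - 1)) * x powr (\<mu> - 0)
     + Gamma (\<mu>+1) * rGamma (\<mu> - 0 + 1) * ((0 - 1) * ln x * x powr (\<mu> - 0))
     = (Gamma (\<mu>+1) * rGamma (\<mu> + 1)) * (x powr \<mu> * (Digamma (\<mu> + 1) - ln x))"
    by (simp add: algebra_simps)
  ultimately have D: "(g has_field_derivative x powr \<mu> * (Digamma (\<mu> + 1) - ln x)) (at 0)"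
    using G1 by simp
  have g0: "g 0 = x powr \<mu>" using G1 by (simp add: g_def)
  have "((\<lambda>\<nu>. (g \<nu> - g 0) / (\<nu> - 0)) \<longlongrightarrow> x powr \<mu> * (Digamma (\<mu> + 1) - ln x)) (at 0)"
    using D by (simp add: DERIV_def has_field_derivative_iff)
  hence "((\<lambda>\<nu>. (frac_deriv_pow \<nu> \<mu> x - x powr \<mu>) / \<nu>) \<longlongrightarrow> x powr \<mu> * (Digamma (\<mu> + 1) - ln x)) (at 0)"
    by (simp add: fg g0)
  thus ?thesis unfolding ln_deriv_pow_def by (rule tendsto_Lim[rotated]) simp
qed


lemma power_rep_unique:
  assumes c: "power_rep c f" and d: "power_rep d f"
  shows "c = d"
proof -
  define S where "S = {\<mu>. c \<mu> \<noteq> 0} \<union> {\<mu>. d \<mu> \<noteq> 0}"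
  have fS: "finite S" using c d by (simp add: S_def power_rep_def)
  have sc: "(\<Sum>\<mu>\<in>S. c \<mu> * y powr \<mu>) = f y" if "y > 0" for y
  proof -
    have "(\<Sum>\<mu>\<in>S. c \<mu> * y powr \<mu>) = (\<Sum>\<mu>\<in>{\<mu>. c \<mu> \<noteq> 0}. c \<mu> * y powr \<mu>)"
      by (rule sum.mono_neutral_right[OF fS]) (auto simp: S_def)
    thus ?thesis using c that by (simp add: power_rep_def)
  qed
  have sd: "(\<Sum>\<mu>\<in>S. d \<mu> * y powr \<mu>) = f y" if "y > 0" for y
  proof -
    have "(\<Sum>\<mu>\<in>S. d \<mu> * y powr \<mu>) = (\<Sum>\<mu>\<in>{\<mu>. d \<mu> \<noteq> 0}. d \<mu> * y powr \<mu>)"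
      by (rule sum.mono_neutral_right[OF fS]) (auto simp: S_def)
    thus ?thesis using d that by (simp add: power_rep_def)
  qed
  have "\<forall>y>0. (\<Sum>\<mu>\<in>S. (c \<mu> - d \<mu>) * y powr \<mu>) = 0"
    using sc sd by (simp add: left_diff_distrib sum_subtractf)
  from powr_indep[OF fS this] have "\<forall>\<mu>\<in>S. c \<mu> = d \<mu>" by simp
  hence eq: "\<And>\<mu>. \<mu> \<in> S \<Longrightarrow> c \<mu> = d \<mu>" by blast
  show ?thesis
  proof (rule ext)
    fix \<mu>
    show "c \<mu> = d \<mu>"
    proof (cases "\<mu> \<in> S")
      case True thus ?thesis by (rule eq)
    next
      case False thus ?thesis unfolding S_def by simp
    qed
  qed
qed

lemma ln_deriv_rep:
  assumes "power_rep c f"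
  shows "ln_deriv f x = (\<Sum>\<mu>\<in>{\<mu>. c \<mu> \<noteq> 0}. c \<mu> * ln_deriv_pow \<mu> x)"
proof -
  have "(THE c. power_rep c f) = c"
    using assms power_rep_unique by blast
  thus ?thesis by (simp add: ln_deriv_def)
qed

lemma rep_single:
  assumes "a \<noteq> 0" "\<mu> \<ge> 0" "\<And>y. y > 0 \<Longrightarrow> f y = a * y powr \<mu>"
  shows "ln_deriv f x = a * ln_deriv_pow \<mu> x"
proof -
  have s: "{\<nu>. (if \<nu> = \<mu> then a else 0) \<noteq> 0} = {\<mu>}" using assms(1) by auto
  have "power_rep (\<lambda>\<nu>. if \<nu> = \<mu> then a else 0) f"
    unfolding power_rep_def s using assms by auto
  from ln_deriv_rep[OF this, of x] show ?thesis by (simp add: s)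
qed

lemma rep_zero: "ln_deriv (\<lambda>y. 0) x = 0"
proof -
  have "power_rep (\<lambda>\<nu>. 0) (\<lambda>y. 0)" unfolding power_rep_def by simp
  from ln_deriv_rep[OF this, of x] show ?thesis by simp
qed

lemma deriv_pow_all: "deriv (\<lambda>t::real. t ^ n) y = real n * y ^ (n - 1)"
  using DERIV_pow[of n y UNIV] by (intro DERIV_imp_deriv) simp

lemma ln_deriv_pow_n:
  assumes "y > 0"
  shows "ln_deriv (\<lambda>t::real. t ^ n) y = y ^ n * (Digamma (real n + 1) - ln y)"
proof -
  have "ln_deriv (\<lambda>t::real. t ^ n) y = 1 * ln_deriv_pow (real n) y"
    by (rule rep_single) (auto simp: powr_realpow)
  thus ?thesis using ldp_eq[of "real n" y] assms by (simp add: powr_realpow)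
qed

lemma deriv_second:
  assumes "x > 0"
  shows "deriv (\<lambda>y. ln_deriv (\<lambda>t::real. t ^ n) y) x
     = real n * x ^ (n - 1) * (Digamma (real n + 1) - ln x) - x ^ n / x"
proof -
  have "((\<lambda>y. y ^ n * (Digamma (real n + 1) - ln y)) has_field_derivative
      real n * x ^ (n - 1) * (Digamma (real n + 1) - ln x) + x ^ n * (0 - 1 / x)) (at x)"
  proof -
    have "((\<lambda>y. Digamma (real n + 1) - ln y) has_field_derivative (0 - 1 / x)) (at x)"
      by (rule DERIV_diff[OF DERIV_const DERIV_ln_divide[OF assms]])
    from DERIV_mult[OF DERIV_pow this] show ?thesis by simp
  qed
  hence "((\<lambda>y. ln_deriv (\<lambda>t::real. t ^ n) y) has_field_derivative
      real n * x ^ (n - 1) * (Digamma (real n + 1) - ln x) + x ^ n * (0 - 1 / x)) (at x)"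
    by (rule has_field_derivative_transform_within_open[where S="{0<..}"])
       (use assms ln_deriv_pow_n in auto)
  from DERIV_imp_deriv[OF this] show ?thesis by simp
qed

theorem mainTheorem5:
  fixes n :: nat and x :: real
  assumes "x > 0"
  shows "ln_deriv (\<lambda>y. deriv (\<lambda>t. t ^ n) y) x - deriv (\<lambda>y. ln_deriv (\<lambda>t. t ^ n) y) x
           = (if n = 0 then 1 / x else 0)"
proof (cases "n = 0")
  case True
  have "ln_deriv (\<lambda>y. deriv (\<lambda>t. t ^ n) y) x = 0"
    using True by (simp add: deriv_pow_all rep_zero)
  moreover have "deriv (\<lambda>y. ln_deriv (\<lambda>t. t ^ n) y) x = - 1 / x"
    using deriv_second[OF assms, of n] True by simp
  ultimately show ?thesis using True by simp
next
  case False
  have "ln_deriv (\<lambda>y. deriv (\<lambda>t. t ^ n) y) x = real n * ln_deriv_pow (real (n - 1)) x"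
  proof (rule rep_single)
    fix y :: real assume "y > 0"
    thus "deriv (\<lambda>t. t ^ n) y = real n * y powr real (n - 1)"
      by (simp add: deriv_pow_all powr_realpow)
  qed (use False in auto)
  also have "\<dots> = real n * (x ^ (n - 1) * (Digamma (real n) - ln x))"
  proof -
    have "x powr real (n - 1) = x ^ (n - 1)" using assms by (simp add: powr_realpow)
    moreover have "real (n - 1) + 1 = real n" using False by (simp add: of_nat_diff)
    ultimately show ?thesis using ldp_eq[of "real (n - 1)" x] assms by simp
  qed
  finally have A: "ln_deriv (\<lambda>y. deriv (\<lambda>t. t ^ n) y) x = real n * (x ^ (n - 1) * (Digamma (real n) - ln x))" .
  have dg: "Digamma (real n + 1) = Digamma (real n) + 1 / real n"
    using Digamma_plus1[of "real n"] False by simp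
  have xn: "x ^ n / x = x ^ (n - 1)"
    using False assms by (cases n) auto
  have B: "deriv (\<lambda>y. ln_deriv (\<lambda>t. t ^ n) y) x
     = real n * x ^ (n - 1) * (Digamma (real n) + 1 / real n - ln x) - x ^ (n - 1)"
    using deriv_second[OF assms, of n] unfolding dg xn .
  show ?thesis unfolding A B using False by (simp add: algebra_simps)
qed

end
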